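(* Let $M\ge \frac52$ and $\mu=\frac{2}{2M+3}$. Algorithm A (defined in the context) is a valid semi-online algorithm with migration factor at most $M$, and for every input whose optimal offline makespan is $1$ it produces a schedule of makespan at most $1+\mu=\frac{2M+5}{2M+3}$. Hence its competitive ratio is at most $\frac{2M+5}{2M+3}$.
   Context: Model (two hierarchical machines with migration, bin stretching). Jobs $1,2,\dots,n$ arrive one by one ($n$ unknown in advance). Job $j$ has a size $p_j>0$ and a grade of service (GoS) $g_j\in\{1,2\}$; a job of GoS $1$ may only be processed on machine $m_1$, a job of GoS $2$ may be processed on $m_1$ or on $m_2$. The load of a machine is the total size of the jobs assigned to it, and the makespan is the maximum load. When job $j$ arrives, the algorithm must assign it to a machine, and at the same time it may reassign (migrate) previously arrived jobs to other machines (respecting the GoS constraints), provided that the total size of the migrated jobs is at most $M\cdot p_j$; $M\ge 0$ is the migration factor. Bin stretching: the optimal offline makespan of the complete input is known in advance and scaled to $1$; in particular every job has size at most $1$, the total size of all jobs is at most $2$, and the total size of all GoS-$1$ jobs is at most $1$. The competitive ratio of an algorithm is the supremum over inputs of (algorithm's makespan)/(optimal makespan). Notation: $Y_{j}$ is the set of jobs on $m_2$ just after job $j$ has been handled (including migrations), $y_j$ its total size, $y_0=0$. $Z$ denotes the set of GoS-2 jobs currently on $m_1$. Algorithm A (with $\mu=\frac{2}{2M+3}$). On arrival of job $j$: (i) if $g_j=1$ or $y_{j-1}\ge 1-\mu$, assign $j$ to $m_1$; (ii) else if $y_{j-1}+p_j\le 1+\mu$, assign $j$ to $m_2$; (iii)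 otherwise, among all GoS-2 jobs arrived so far (the current $Z$, the current $Y_{j-1}$, and $j$), choose a subset $W$ of maximum total size subject to total size at most $1$; rearrange so that exactly the jobs of $W$ are on $m_2$ and all other arrived jobs are on $m_1$. *)

theory Defs
  imports Complex_Main
begin

text \<open>Job j has size p j and grade of service g j (1 or 2).
  A schedule of the jobs in A (arrived jobs) is described by the set Y of jobs on machine m2;
  all other jobs of A are on machine m1.\<close>

definition gos2_jobs :: "(nat \<Rightarrow> nat) \<Rightarrow> nat \<Rightarrow> nat set" where
  "gos2_jobs g j = {i \<in> {1..j}. g i = 2}"

definition load1 :: "(nat \<Rightarrow> real) \<Rightarrow> nat \<Rightarrow> nat set \<Rightarrow> real" where
  "load1 p j Y = sum p ({1..j} - Y)"

definition load2 :: "(nat \<Rightarrow> real) \<Rightarrow> nat set \<Rightarrow> real" where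
  "load2 p Y = sum p Y"

definition makespan :: "(nat \<Rightarrow> real) \<Rightarrow> nat \<Rightarrow> nat set \<Rightarrow> real" where
  "makespan p j Y = max (load1 p j Y) (load2 p Y)"

definition opt_makespan :: "(nat \<Rightarrow> real) \<Rightarrow> (nat \<Rightarrow> nat) \<Rightarrow> nat \<Rightarrow> real" where
  "opt_makespan p g n = Min ((\<lambda>S. makespan p n S) ` Pow (gos2_jobs g n))"

definition mu :: "real \<Rightarrow> real" where
  "mu M = 2 / (2 * M + 3)"

text \<open>One step of Algorithm A: Yprev = Y_{j-1}, Ynew = Y_j. Step (iii) may choose any
  maximum-size subset W (ties arbitrary), so the algorithm is described as a relation.\<close>
definition algA_step ::
  "real \<Rightarrow> (nat \<Rightarrow> real) \<Rightarrow> (nat \<Rightarrow> nat) \<Rightarrow> nat \<Rightarrow> nat set \<Rightarrow> nat set \<Rightarrow> bool" where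
  "algA_step M p g j Yprev Ynew =
     (if g j = 1 \<or> sum p Yprev \<ge> 1 - mu M then Ynew = Yprev
      else if sum p Yprev + p j \<le> 1 + mu M then Ynew = insert j Yprev
      else (Ynew \<subseteq> gos2_jobs g j \<and> sum p Ynew \<le> 1 \<and>
            (\<forall>W. W \<subseteq> gos2_jobs g j \<and> sum p W \<le> 1 \<longrightarrow> sum p W \<le> sum p Ynew)))"

definition algA_run ::
  "real \<Rightarrow> (nat \<Rightarrow> real) \<Rightarrow> (nat \<Rightarrow> nat) \<Rightarrow> nat \<Rightarrow> (nat \<Rightarrow> nat set) \<Rightarrow> bool" where
  "algA_run M p g n Y = (Y 0 = {} \<and> (\<forall>j\<in>{1..n}. algA_step M p g j (Y (j - 1)) (Y j)))"

text \<open>Total size of previously arrived jobs migrated when job j is handled.\<close>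
definition migrated :: "(nat \<Rightarrow> real) \<Rightarrow> nat \<Rightarrow> nat set \<Rightarrow> nat set \<Rightarrow> real" where
  "migrated p j Yprev Ynew = sum p (((Yprev - Ynew) \<union> (Ynew - Yprev)) \<inter> {1..<j})"

end

theory Submission
  imports Defs
begin

lemma gos2_sub: "gos2_jobs g k \<subseteq> {1..k}"
  by (auto simp: gos2_jobs_def)

lemma gos2_fin[simp]: "finite (gos2_jobs g k)"
  by (rule finite_subset[OF gos2_sub]) simp

lemma gos2_0[simp]: "gos2_jobs g 0 = {}"
  by (auto simp: gos2_jobs_def)

lemma gos2_Suc: "gos2_jobs g (Suc k) =
   (if g (Suc k) = 2 then insert (Suc k) (gos2_jobs g k) else gos2_jobs g k)"
  by (auto simp: gos2_jobs_def le_Suc_eq)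

lemma gos2_mono: "k \<le> m \<Longrightarrow> gos2_jobs g k \<subseteq> gos2_jobs g m"
  by (auto simp: gos2_jobs_def)

lemma mu_pos: "M \<ge> 0 \<Longrightarrow> mu M > 0"
  by (simp add: mu_def)

lemma mu_eq: "M \<ge> 0 \<Longrightarrow> 2 * M * mu M + 3 * mu M = 2"
proof -
  assume "M \<ge> 0"
  then have "2 * M + 3 \<noteq> 0" by simp
  then have "(2 * M + 3) * mu M = 2" by (simp add: mu_def field_simps)
  then show ?thesis by (simp add: algebra_simps)
qed

definition INV where
  "INV M p g k Y \<longleftrightarrow> Y \<subseteq> gos2_jobs g k \<and> sum p Y \<le> 1 + mu M \<and>
     (sum p Y < 1 - mu M \<longrightarrow>
        (\<forall>X. X \<subseteq> gos2_jobs g k \<and> sum p X \<le> 1 \<longrightarrow> sum p X \<le> sum p Y))"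

lemma sum_nonneg_sub:
  assumes "\<forall>i\<in>{1..k}. (p::nat\<Rightarrow>real) i > 0" "X \<subseteq> {1..k}"
  shows "sum p X \<ge> 0"
  using assms by (intro sum_nonneg) (auto intro: less_imp_le)

lemma sum_mono_sub:
  assumes "\<forall>i\<in>{1..k}. (p::nat\<Rightarrow>real) i > 0" "A \<subseteq> B" "B \<subseteq> {1..k}"
  shows "sum p A \<le> sum p B"
  using assms by (intro sum_mono2) (auto intro: less_imp_le finite_subset)

lemma step_inv:
  assumes M: "M \<ge> 0"
    and pos: "\<forall>i\<in>{1..Suc k}. p i > 0"
    and gj: "g (Suc k) = 1 \<or> g (Suc k) = 2"
    and I: "INV M p g k Yp"
    and st: "algA_step M p g (Suc k) Yp Yn"
  shows "INV M p g (Suc k) Yn"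
proof -
  have sub: "Yp \<subseteq> gos2_jobs g k" and le: "sum p Yp \<le> 1 + mu M"
    and inv: "sum p Yp < 1 - mu M \<Longrightarrow> X \<subseteq> gos2_jobs g k \<Longrightarrow> sum p X \<le> 1 \<Longrightarrow> sum p X \<le> sum p Yp" for X
    using I by (auto simp: INV_def)
  have mono: "gos2_jobs g k \<subseteq> gos2_jobs g (Suc k)" by (rule gos2_mono) simp
  have mp: "mu M > 0" using mu_pos[OF M] .
  show ?thesis
  proof (cases "g (Suc k) = 1")
    case True
    then have "Yn = Yp" using st by (simp add: algA_step_def)
    moreover have "gos2_jobs g (Suc k) = gos2_jobs g k" using True by (simp add: gos2_Suc)
    ultimately show ?thesis using I by (simp add: INV_def)
  next
    case g2: False
    then have g2': "g (Suc k) = 2" using gj by simp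
    show ?thesis
    proof (cases "sum p Yp \<ge> 1 - mu M")
      case True
      then have "Yn = Yp" using st g2 by (simp add: algA_step_def)
      then show ?thesis using True sub le mono by (auto simp: INV_def)
    next
      case lt: False
      show ?thesis
      proof (cases "sum p Yp + p (Suc k) \<le> 1 + mu M")
        case True
        then have Yn: "Yn = insert (Suc k) Yp" using st g2 lt by (simp add: algA_step_def)
        have nin: "Suc k \<notin> Yp" using sub gos2_sub[of g k] by auto
        have fin: "finite Yp" using sub by (rule finite_subset) simp
        have sY: "sum p Yn = sum p Yp + p (Suc k)" using Yn nin fin by simp
        have pk: "p (Suc k) > 0" using pos by simp
        have s1: "Yn \<subseteq> gos2_jobs g (Suc k)" using Yn sub mono g2' by (auto simp: gos2_Suc)
        have s3: "sum p X \<le> sum p Yn"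
          if h: "sum p Yn < 1 - mu M" "X \<subseteq> gos2_jobs g (Suc k)" "sum p X \<le> 1" for X
        proof -
          have X1: "X - {Suc k} \<subseteq> gos2_jobs g k" using h(2) g2' by (auto simp: gos2_Suc)
          have Xs: "X \<subseteq> {1..Suc k}" using h(2) gos2_sub by blast
          have "sum p (X - {Suc k}) \<le> sum p X"
            using sum_mono_sub[OF pos _ Xs] by blast
          then have "sum p (X - {Suc k}) \<le> sum p Yp"
            using inv[OF _ X1] h sY pk by linarith
          moreover have "sum p X \<le> sum p (X - {Suc k}) + p (Suc k)"
          proof (cases "Suc k \<in> X")
            case True
            have "finite X" using Xs by (rule finite_subset) simp
            then show ?thesis using True by (simp add: sum.remove)
          next
            case False then show ?thesis using pk by simp
          qed
          ultimately show ?thesis using sY by linarith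
        qed
        show ?thesis unfolding INV_def using s1 s3 sY True by auto
      next
        case False
        then have Yn: "Yn \<subseteq> gos2_jobs g (Suc k)" "sum p Yn \<le> 1"
          "\<forall>W. W \<subseteq> gos2_jobs g (Suc k) \<and> sum p W \<le> 1 \<longrightarrow> sum p W \<le> sum p Yn"
          using st g2 lt by (simp_all add: algA_step_def)
        then show ?thesis unfolding INV_def using mp by auto
      qed
    qed
  qed
qed

lemma step_mig:
  assumes M: "M \<ge> 0"
    and pos: "\<forall>i\<in>{1..n}. p i > 0"
    and kn: "Suc k \<le> n"
    and gj: "g (Suc k) = 1 \<or> g (Suc k) = 2"
    and I: "INV M p g k Yp"
    and st: "algA_step M p g (Suc k) Yp Yn"
    and S: "S \<subseteq> gos2_jobs g n" "sum p S \<le> 1" "sum p ({1..n} - S) \<le> 1"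
  shows "migrated p (Suc k) Yp Yn \<le> M * p (Suc k)"
proof -
  define j where "j = Suc k"
  define D where "D = ((Yp - Yn) \<union> (Yn - Yp)) \<inter> {1..<j}"
  have mig: "migrated p (Suc k) Yp Yn = sum p D" by (simp add: migrated_def D_def j_def)
  have sub: "Yp \<subseteq> gos2_jobs g k" and le: "sum p Yp \<le> 1 + mu M"
    and inv: "sum p Yp < 1 - mu M \<Longrightarrow> X \<subseteq> gos2_jobs g k \<Longrightarrow> sum p X \<le> 1 \<Longrightarrow> sum p X \<le> sum p Yp" for X
    using I by (auto simp: INV_def)
  have pj: "p j > 0" using pos kn by (simp add: j_def)
  have Dsub: "D \<subseteq> {1..n}" using kn by (auto simp: D_def j_def)
  have Dnn: "sum p D \<ge> 0" using sum_nonneg_sub[OF pos Dsub] .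
  have mp: "mu M > 0" using mu_pos[OF M] .
  have me: "2 * M * mu M + 3 * mu M = 2" using mu_eq[OF M] .
  have Ypn: "Yp \<subseteq> {1..n}" using sub gos2_sub[of g k] kn by auto
  show ?thesis
  proof (cases "g j = 1 \<or> sum p Yp \<ge> 1 - mu M")
    case True
    then have "Yn = Yp" using st by (simp add: algA_step_def j_def)
    then have "D = {}" by (simp add: D_def)
    then show ?thesis using mig M pj by (simp add: j_def)
  next
    case c1: False
    then have g2: "g j = 2" using gj by (simp add: j_def)
    have a: "sum p Yp < 1 - mu M" using c1 by simp
    show ?thesis
    proof (cases "sum p Yp + p j \<le> 1 + mu M")
      case True
      then have "Yn = insert j Yp" using st c1 by (simp add: algA_step_def j_def)
      then have "D = {}" by (auto simp: D_def)
      then show ?thesis using mig M pj by (simp add: j_def)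
    next
      case c2: False
      define G where "G = gos2_jobs g j"
      have Yn: "Yn \<subseteq> G" "sum p Yn \<le> 1"
        "\<And>W. W \<subseteq> G \<Longrightarrow> sum p W \<le> 1 \<Longrightarrow> sum p W \<le> sum p Yn"
        using st c1 c2 by (simp_all add: algA_step_def j_def G_def)
      have Gn: "G \<subseteq> {1..n}" using gos2_sub[of g j] kn by (auto simp: G_def j_def)
      have GS: "G = insert j (gos2_jobs g k)" using g2 by (simp add: G_def j_def gos2_Suc)
      have jnk: "j \<notin> gos2_jobs g k" using gos2_sub[of g k] by (auto simp: j_def)
      have Ynn: "Yn \<subseteq> {1..n}" using Yn(1) Gn by auto
      have nn: "A \<subseteq> {1..n} \<Longrightarrow> sum p A \<ge> 0" for A by (rule sum_nonneg_sub[OF pos])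
      have mo: "A \<subseteq> B \<Longrightarrow> B \<subseteq> {1..n} \<Longrightarrow> sum p A \<le> sum p B" for A B
        by (rule sum_mono_sub[OF pos])
      have fin: "A \<subseteq> {1..n} \<Longrightarrow> finite A" for A by (rule finite_subset) auto
      have un: "sum p (A \<union> B) \<le> sum p A + sum p B" if "A \<subseteq> {1..n}" "B \<subseteq> {1..n}" for A B
      proof -
        have "sum p (A \<union> B) + sum p (A \<inter> B) = sum p A + sum p B"
          using sum.union_inter[OF fin[OF that(1)] fin[OF that(2)]] .
        moreover have "sum p (A \<inter> B) \<ge> 0" using nn that by (meson inf.coboundedI1)
        ultimately show ?thesis by linarith
      qed
      have ineq: "(M + 1) * (1 + mu M - sum p Yp) \<le> (M + 1) * p j"
        using c2 M by (intro mult_left_mono) auto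
      show ?thesis
      proof (cases "j \<in> Yn")
        case True
        have "D \<subseteq> Yp \<union> (Yn - {j})" by (auto simp: D_def)
        then have "sum p D \<le> sum p (Yp \<union> (Yn - {j}))" by (rule mo) (use Ypn Ynn in auto)
        also have "\<dots> \<le> sum p Yp + sum p (Yn - {j})" by (rule un) (use Ypn Ynn in auto)
        also have "sum p (Yn - {j}) = sum p Yn - p j"
          using True fin[OF Ynn] by (simp add: sum_diff1)
        finally have d: "sum p D \<le> sum p Yp + 1 - p j" using Yn(2) by linarith
        have "(M + 2) * sum p Yp \<le> (M + 2) * (1 - mu M)"
          using a M by (intro mult_left_mono) auto
        then have "sum p Yp + 1 \<le> (M + 1) * p j"
          using ineq me unfolding ring_distribs by linarith
        then show ?thesis using d mig unfolding ring_distribs j_def by linarith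
      next
        case False
        have Ynk: "Yn \<subseteq> gos2_jobs g k" using Yn(1) GS False by auto
        have w: "sum p Yn \<le> sum p Yp" using inv[OF a Ynk Yn(2)] .
        have "D \<subseteq> gos2_jobs g k" using sub Ynk by (auto simp: D_def)
        then have d1: "sum p D \<le> sum p (gos2_jobs g k)" by (rule mo) (use GS Gn in auto)
        have sG: "sum p G = p j + sum p (gos2_jobs g k)" using GS jnk by simp
        have "G \<inter> S \<subseteq> S" by auto
        moreover have "S \<subseteq> {1..n}" using S(1) gos2_sub[of g n] by blast
        ultimately have "sum p (G \<inter> S) \<le> sum p S" by (rule mo)
        then have "sum p (G \<inter> S) \<le> 1" using S(2) by linarith
        then have w1: "sum p (G \<inter> S) \<le> sum p Yn" using Yn(3) by auto
        have "G - S \<subseteq> {1..n} - S" using Gn by auto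
        then have "sum p (G - S) \<le> sum p ({1..n} - S)" by (rule mo) auto
        then have "sum p (G - S) \<le> 1" using S(3) by linarith
        then have w2: "sum p (G - S) \<le> sum p Yn" using Yn(3) by auto
        have "sum p G = sum p (G \<inter> S) + sum p (G - S)"
          using sum.Int_Diff[OF fin[OF Gn], of p S] .
        then have d: "sum p D \<le> 2 * sum p Yp - p j" using d1 sG w1 w2 w by linarith
        have "(M + 3) * sum p Yp \<le> (M + 3) * (1 - mu M)"
          using a M by (intro mult_left_mono) auto
        then have "2 * sum p Yp \<le> (M + 1) * p j"
          using ineq me mp unfolding ring_distribs by linarith
        then show ?thesis using d mig unfolding ring_distribs j_def by linarith
      qed
    qed
  qed
qed

lemma step_exists: "\<exists>Z. algA_step M p g j Yp Z"
proof -
  define F where "F = {W. W \<subseteq> gos2_jobs g j \<and> sum p W \<le> 1}"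
  have fF: "finite F" unfolding F_def
    by (rule finite_subset[of _ "Pow (gos2_jobs g j)"]) auto
  have neF: "{} \<in> F" by (simp add: F_def)
  define m where "m = Max (sum p ` F)"
  have "m \<in> sum p ` F" unfolding m_def using fF neF by (intro Max_in) auto
  then obtain W where W: "W \<in> F" "sum p W = m" by auto
  have mx: "\<forall>V. V \<subseteq> gos2_jobs g j \<and> sum p V \<le> 1 \<longrightarrow> sum p V \<le> sum p W"
  proof (intro allI impI)
    fix V assume "V \<subseteq> gos2_jobs g j \<and> sum p V \<le> 1"
    then have "V \<in> F" by (simp add: F_def)
    then show "sum p V \<le> sum p W" unfolding W(2) m_def using fF by (intro Max_ge) auto
  qed
  show ?thesis
  proof (cases "g j = 1 \<or> sum p Yp \<ge> 1 - mu M")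
    case True then show ?thesis by (simp add: algA_step_def)
  next
    case c1: False
    show ?thesis
    proof (cases "sum p Yp + p j \<le> 1 + mu M")
      case True
      then have "algA_step M p g j Yp (insert j Yp)" using c1 by (simp add: algA_step_def)
      then show ?thesis ..
    next
      case False
      have "W \<subseteq> gos2_jobs g j" "sum p W \<le> 1" using W(1) by (simp_all add: F_def)
      then have "algA_step M p g j Yp W" using c1 False mx by (simp add: algA_step_def)
      then show ?thesis ..
    qed
  qed
qed

theorem mainTheorem1:
  fixes M :: real and p :: "nat \<Rightarrow> real" and g :: "nat \<Rightarrow> nat" and n :: nat
  assumes "M \<ge> 5 / 2"
    and "\<forall>j\<in>{1..n}. p j > 0"
    and "\<forall>j\<in>{1..n}. g j = 1 \<or> g j = 2"
    and "opt_makespan p g n = 1"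
  shows "(\<exists>Y. algA_run M p g n Y) \<and>
         (\<forall>Y. algA_run M p g n Y \<longrightarrow>
            (\<forall>j\<in>{1..n}. Y j \<subseteq> gos2_jobs g j) \<and>
            (\<forall>j\<in>{1..n}. migrated p j (Y (j - 1)) (Y j) \<le> M * p j) \<and>
            makespan p n (Y n) \<le> 1 + mu M \<and>
            1 + mu M = (2 * M + 5) / (2 * M + 3))"
proof -
  have M: "M \<ge> 0" using assms(1) by simp
  have pos: "\<forall>j\<in>{1..n}. p j > 0" using assms(2) .
  have mp: "mu M > 0" using mu_pos[OF M] .
  have fP: "finite ((\<lambda>S. makespan p n S) ` Pow (gos2_jobs g n))" by simp
  have "opt_makespan p g n \<in> (\<lambda>S. makespan p n S) ` Pow (gos2_jobs g n)"
    unfolding opt_makespan_def using fP by (intro Min_in) auto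
  then obtain S where S0: "S \<subseteq> gos2_jobs g n" "makespan p n S = 1"
    using assms(4) by auto
  have S1: "sum p S \<le> 1" "sum p ({1..n} - S) \<le> 1"
    using S0(2) by (auto simp: makespan_def load1_def load2_def)
  have Sn: "S \<subseteq> {1..n}" using S0(1) gos2_sub[of g n] by auto
  have ex: "\<exists>Y. algA_run M p g n Y"
  proof -
    define Y where "Y = rec_nat {} (\<lambda>k Yk. SOME Z. algA_step M p g (Suc k) Yk Z)"
    have "algA_run M p g n Y"
      unfolding algA_run_def
    proof (intro conjI ballI)
      show "Y 0 = {}" by (simp add: Y_def)
    next
      fix j assume "j \<in> {1..n}"
      then obtain k where j: "j = Suc k" by (cases j) auto
      have "algA_step M p g (Suc k) (Y k) (Y (Suc k))"
        unfolding Y_def using someI_ex[OF step_exists] by simp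
      then show "algA_step M p g j (Y (j - 1)) (Y j)" using j by simp
    qed
    then show ?thesis by blast
  qed
  have eq: "1 + mu M = (2 * M + 5) / (2 * M + 3)"
  proof -
    have "2 * M + 3 \<noteq> 0" using M by simp
    then show ?thesis by (simp add: mu_def field_simps)
  qed
  have rest: "(\<forall>j\<in>{1..n}. Y j \<subseteq> gos2_jobs g j) \<and>
            (\<forall>j\<in>{1..n}. migrated p j (Y (j - 1)) (Y j) \<le> M * p j) \<and>
            makespan p n (Y n) \<le> 1 + mu M" if run: "algA_run M p g n Y" for Y
  proof -
    have Y0: "Y 0 = {}" using run unfolding algA_run_def by simp
    have stp: "algA_step M p g (Suc k) (Y k) (Y (Suc k))" if "Suc k \<le> n" for k
    proof -
      have "Suc k \<in> {1..n}" using that by simp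
      then have "algA_step M p g (Suc k) (Y (Suc k - 1)) (Y (Suc k))"
        using run unfolding algA_run_def by blast
      then show ?thesis by simp
    qed
    have I: "k \<le> n \<Longrightarrow> INV M p g k (Y k)" for k
    proof (induction k)
      case 0 then show ?case using Y0 mp by (simp add: INV_def)
    next
      case (Suc k)
      show ?case
      proof (rule step_inv[OF M])
        show "\<forall>i\<in>{1..Suc k}. p i > 0" using pos Suc.prems by auto
        show "g (Suc k) = 1 \<or> g (Suc k) = 2" using assms(3) Suc.prems by auto
        show "INV M p g k (Y k)" using Suc by simp
        show "algA_step M p g (Suc k) (Y k) (Y (Suc k))" using stp Suc.prems .
      qed
    qed
    have A: "\<forall>j\<in>{1..n}. Y j \<subseteq> gos2_jobs g j" using I by (auto simp: INV_def)
    have B: "\<forall>j\<in>{1..n}. migrated p j (Y (j - 1)) (Y j) \<le> M * p j"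
    proof
      fix j assume "j \<in> {1..n}"
      then obtain k where j: "j = Suc k" "Suc k \<le> n" by (cases j) auto
      have "migrated p (Suc k) (Y k) (Y (Suc k)) \<le> M * p (Suc k)"
        by (rule step_mig[OF M pos j(2) _ I stp[OF j(2)] S0(1) S1])
          (use assms(3) j in auto)
      then show "migrated p j (Y (j - 1)) (Y j) \<le> M * p j" using j by simp
    qed
    have In: "INV M p g n (Y n)" using I by simp
    have Ysub: "Y n \<subseteq> {1..n}" using In gos2_sub[of g n] by (auto simp: INV_def)
    have l2: "load2 p (Y n) \<le> 1 + mu M" using In by (simp add: INV_def load2_def)
    have tot: "sum p {1..n} = sum p S + sum p ({1..n} - S)"
      using sum.subset_diff[OF Sn finite_atLeastAtMost, of p] by linarith
    have l1eq: "load1 p n (Y n) = sum p {1..n} - sum p (Y n)"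
      unfolding load1_def using Ysub by (simp add: sum_diff)
    have l1: "load1 p n (Y n) \<le> 1 + mu M"
    proof (cases "sum p (Y n) \<ge> 1 - mu M")
      case True then show ?thesis using l1eq tot S1 by linarith
    next
      case False
      then have "sum p S \<le> sum p (Y n)" using In S0(1) S1(1) by (auto simp: INV_def)
      then show ?thesis using l1eq tot S1 mp by linarith
    qed
    show ?thesis using A B l1 l2 by (simp add: makespan_def)
  qed
  show ?thesis
  proof (intro conjI allI impI)
    show "\<exists>Y. algA_run M p g n Y" by (rule ex)
  next
    fix Y assume r: "algA_run M p g n Y"
    show "\<forall>j\<in>{1..n}. Y j \<subseteq> gos2_jobs g j" using rest[OF r] by simp
    show "\<forall>j\<in>{1..n}. migrated p j (Y (j - 1)) (Y j) \<le> M * p j" using rest[OF r] by simp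
    show "makespan p n (Y n) \<le> 1 + mu M" using rest[OF r] by simp
    show "1 + mu M = (2 * M + 5) / (2 * M + 3)" by (rule eq)
  qed
qed

end
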